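(* Let $\mathbb{F}\in\{\mathbb{R},\mathbb{C}\}$, $N\ge2$, and let $\mathcal{P}(M,N)$ be the set of Parseval frames for $\mathbb{F}^N$ with $M$ vectors. Suppose an equiangular Parseval frame exists in $\mathcal{P}(M,N)$. Then $\Phi\in\mathcal{P}(M,N)$ maximizes $V_2$ over $\mathcal{P}(M,N)$ if and only if $\Phi$ is an equiangular Parseval frame.
   Context: A Parseval frame for $\mathbb{F}^N$ is a family $\{\varphi_i\}_{i=1}^M\subseteq\mathbb{F}^N$ whose $N\times M$ matrix $\Phi$ (columns $\varphi_i$) satisfies $\Phi\Phi^*=I$; it is equiangular if all $\|\varphi_i\|$ are equal and all $|\langle\varphi_i,\varphi_j\rangle|$, $i\neq j$, are equal. For $K\subseteq[M]$, $\Phi_K$ is the submatrix of columns indexed by $K$; $v_k(F)=\sqrt{\det(F^*F)}$; and $V_k(\Phi)=\sum_{|K|=k}v_k(\Phi_K)$. *)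

theory Defs
  imports "HOL-Analysis.Analysis"
begin

text \<open>A frame with M vectors in F^N is an N x M matrix Phi (rows indexed by 'n,
  columns by 'm); its columns are the frame vectors.  The scalar field F is
  either the reals or the complexes; we work inside complex numbers and encode
  the choice of field by the set Fld of allowed entries (Fld = Reals or UNIV).\<close>

definition frame_vec :: "complex^'m^'n \<Rightarrow> 'm \<Rightarrow> complex^'n" where
  "frame_vec Phi j = (\<chi> i. Phi $ i $ j)"

definition cinner :: "complex^'n \<Rightarrow> complex^'n \<Rightarrow> complex" where
  "cinner u v = (\<Sum>i\<in>UNIV. u $ i * cnj (v $ i))"

definition parseval_frame :: "complex set \<Rightarrow> complex^'m^'n \<Rightarrow> bool" where
  "parseval_frame Fld Phi \<longleftrightarrow>
     (\<forall>i j. Phi $ i $ j \<in> Fld) \<and>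
     (\<forall>i k. (\<Sum>j\<in>UNIV. Phi $ i $ j * cnj (Phi $ k $ j)) = (if i = k then 1 else 0))"

definition equiangular :: "complex^'m^'n \<Rightarrow> bool" where
  "equiangular Phi \<longleftrightarrow>
     (\<exists>c. \<forall>j. norm (frame_vec Phi j) = c) \<and>
     (\<exists>d. \<forall>i j. i \<noteq> j \<longrightarrow> cmod (cinner (frame_vec Phi i) (frame_vec Phi j)) = d)"

definition gram :: "complex^'m^'n \<Rightarrow> 'm \<Rightarrow> 'm \<Rightarrow> complex" where
  "gram Phi a b = (\<Sum>l\<in>UNIV. cnj (Phi $ l $ a) * Phi $ l $ b)"

definition det_on :: "'a set \<Rightarrow> ('a \<Rightarrow> 'a \<Rightarrow> complex) \<Rightarrow> complex" where
  "det_on K A = (\<Sum>p | p permutes K. of_int (sign p) * (\<Prod>i\<in>K. A i (p i)))"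

text \<open>v_k(Phi_K) = sqrt(det(Phi_K^* Phi_K)) (the determinant is real and nonnegative).\<close>
definition vol_sub :: "complex^'m^'n \<Rightarrow> 'm set \<Rightarrow> real" where
  "vol_sub Phi K = sqrt (Re (det_on K (gram Phi)))"

definition V :: "nat \<Rightarrow> complex^'m^'n \<Rightarrow> real" where
  "V k Phi = (\<Sum>K | K \<subseteq> UNIV \<and> card K = k. vol_sub Phi K)"

end

theory Submission
  imports Defs
begin

lemma cs_sum:
  fixes y :: "'a \<Rightarrow> real"
  assumes "finite P"
  shows "(\<Sum>p\<in>P. \<Sum>q\<in>P. (y p - y q)^2) = 2 * (card P * (\<Sum>p\<in>P. (y p)^2) - (\<Sum>p\<in>P. y p)^2)"
proof -
  have "(\<Sum>p\<in>P. \<Sum>q\<in>P. (y p - y q)^2) = (\<Sum>p\<in>P. \<Sum>q\<in>P. ((y p)^2 + (y q)^2 - 2 * (y p * y q)))"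
    by (intro sum.cong refl) (simp add: power2_diff)
  also have "\<dots> = (\<Sum>p\<in>P. \<Sum>q\<in>P. (y p)^2) + (\<Sum>p\<in>P. \<Sum>q\<in>P. (y q)^2) - 2 * (\<Sum>p\<in>P. \<Sum>q\<in>P. y p * y q)"
    by (simp only: sum.distrib sum_subtractf sum_distrib_left)
  also have "(\<Sum>p\<in>P. \<Sum>q\<in>P. y p * y q) = (\<Sum>p\<in>P. y p)^2"
    by (simp add: power2_eq_square sum_product)
  also have "(\<Sum>p\<in>P. \<Sum>q\<in>P. (y p)^2) = card P * (\<Sum>p\<in>P. (y p)^2)"
    by (simp add: sum_distrib_left)
  also have "(\<Sum>p\<in>P. \<Sum>q\<in>P. (y q)^2) = card P * (\<Sum>p\<in>P. (y p)^2)"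
    by (simp add: sum_distrib_left)
  finally show ?thesis by simp
qed

lemma aux1: "(0::real) \<le> A \<Longrightarrow> A = 2*(B - C) \<Longrightarrow> C \<le> B" by simp
lemma aux2: "(C::real) = B \<Longrightarrow> A = 2*(B - C) \<Longrightarrow> A = 0" by simp
lemma aux3: "(A::real) = 0 \<Longrightarrow> A = 2*(B - C) \<Longrightarrow> C = B" by simp

lemma cs_le:
  fixes y :: "'a \<Rightarrow> real"
  assumes "finite P"
  shows "(\<Sum>p\<in>P. y p)^2 \<le> card P * (\<Sum>p\<in>P. (y p)^2)"
proof -
  have "0 \<le> (\<Sum>p\<in>P. \<Sum>q\<in>P. (y p - y q)^2)" by (intro sum_nonneg) auto
  then show ?thesis by (rule aux1[OF _ cs_sum[OF assms, of y]])
qed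

lemma cs_eq:
  fixes y :: "'a \<Rightarrow> real"
  assumes "finite P"
  shows "(\<Sum>p\<in>P. y p)^2 = card P * (\<Sum>p\<in>P. (y p)^2) \<longleftrightarrow> (\<forall>p\<in>P. \<forall>q\<in>P. y p = y q)"
proof
  assume h: "(\<Sum>p\<in>P. y p)^2 = card P * (\<Sum>p\<in>P. (y p)^2)"
  have z: "(\<Sum>p\<in>P. \<Sum>q\<in>P. (y p - y q)^2) = 0" by (rule aux2[OF h cs_sum[OF assms, of y]])
  define f where "f = (\<lambda>p. \<Sum>q\<in>P. (y p - y q)^2)"
  have nn: "\<And>p. p \<in> P \<Longrightarrow> 0 \<le> f p" unfolding f_def by (intro sum_nonneg) auto
  have z': "sum f P = 0" using z unfolding f_def .
  have z2: "\<forall>p\<in>P. f p = 0"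
  proof -
    have "(sum f P = 0) = (\<forall>x\<in>P. f x = 0)" by (rule sum_nonneg_eq_0_iff) (use assms nn in auto)
    then show ?thesis using z' by blast
  qed
  show "\<forall>p\<in>P. \<forall>q\<in>P. y p = y q"
  proof (intro ballI)
    fix p q assume pq: "p \<in> P" "q \<in> P"
    define g where "g = (\<lambda>q. (y p - y q)^2)"
    have "sum g P = 0" using z2 pq unfolding f_def g_def by blast
    moreover have "\<And>q. q \<in> P \<Longrightarrow> 0 \<le> g q" unfolding g_def by simp
    moreover have "(sum g P = 0) = (\<forall>x\<in>P. g x = 0)" by (rule sum_nonneg_eq_0_iff) (use assms calculation(2) in auto)
    ultimately have "\<forall>q\<in>P. g q = 0" by blast
    then have "(y p - y q)^2 = 0" using pq unfolding g_def by blast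
    then show "y p = y q" by simp
  qed
next
  assume h: "\<forall>p\<in>P. \<forall>q\<in>P. y p = y q"
  have e0: "(y p - y q)^2 = 0" if "p \<in> P" "q \<in> P" for p q
  proof -
    have "y p = y q" using h that by blast
    then show ?thesis by simp
  qed
  have "(\<Sum>p\<in>P. \<Sum>q\<in>P. (y p - y q)^2) = 0"
    by (intro sum.neutral ballI) (simp add: e0)
  then show "(\<Sum>p\<in>P. y p)^2 = card P * (\<Sum>p\<in>P. (y p)^2)" by (rule aux3[OF _ cs_sum[OF assms, of y]])
qed


lemma pairs_sum:
  fixes f :: "'a::finite set \<Rightarrow> real"
  shows "(\<Sum>p\<in>{p::'a\<times>'a. fst p \<noteq> snd p}. f {fst p, snd p}) = 2 * (\<Sum>K | K \<subseteq> UNIV \<and> card K = 2. f K)"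
proof -
  let ?P = "{p::'a\<times>'a. fst p \<noteq> snd p}"
  let ?g = "\<lambda>p::'a\<times>'a. {fst p, snd p}"
  have im: "?g ` ?P = {K. K \<subseteq> UNIV \<and> card K = 2}"
  proof
    show "?g ` ?P \<subseteq> {K. K \<subseteq> UNIV \<and> card K = 2}" by auto
    show "{K. K \<subseteq> UNIV \<and> card K = 2} \<subseteq> ?g ` ?P"
    proof
      fix K assume "K \<in> {K. K \<subseteq> (UNIV::'a set) \<and> card K = 2}"
      then obtain x y where "K = {x,y}" "x \<noteq> y" by (auto simp: card_2_iff)
      then show "K \<in> ?g ` ?P" by (intro image_eqI[of _ _ "(x,y)"]) auto
    qed
  qed
  have fib: "(\<Sum>p\<in>{p. p \<in> ?P \<and> ?g p = K}. f (?g p)) = 2 * f K" if K_in: "K \<in> ?g ` ?P" for K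
  proof -
    obtain p where p: "p \<in> ?P" "K = ?g p" using K_in by blast
    define x where "x = fst p"
    define y where "y = snd p"
    have K: "K = {x,y}" "x \<noteq> y" using p unfolding x_def y_def by auto
    have F: "{p. p \<in> ?P \<and> ?g p = K} = {(x,y),(y,x)}"
      using K by (auto simp: doubleton_eq_iff)
    have "(\<Sum>p\<in>{p. p \<in> ?P \<and> ?g p = K}. f (?g p)) = (\<Sum>p\<in>{p. p \<in> ?P \<and> ?g p = K}. f K)"
      by (rule sum.cong) auto
    also have "\<dots> = real (card {(x,y),(y,x)}) * f K" unfolding F by simp
    also have "card {(x,y),(y,x)} = 2" using K by simp
    finally show ?thesis by simp
  qed
  have "(\<Sum>p\<in>?P. f (?g p)) = (\<Sum>K\<in>?g ` ?P. \<Sum>p\<in>{p. p \<in> ?P \<and> ?g p = K}. f (?g p))"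
    by (rule sum.image_gen) simp
  also have "\<dots> = (\<Sum>K\<in>?g ` ?P. 2 * f K)" using fib by (rule sum.cong[OF refl])
  also have "\<dots> = 2 * (\<Sum>K | K \<subseteq> UNIV \<and> card K = 2. f K)" by (simp add: im sum_distrib_left)
  finally show ?thesis .
qed

definition nrm :: "complex^'m^'n \<Rightarrow> 'm \<Rightarrow> real" where
  "nrm Phi a = (\<Sum>l\<in>UNIV. (cmod (Phi$l$a))^2)"

lemma gram_diag: "gram Phi a a = of_real (nrm Phi a)"
  unfolding gram_def nrm_def of_real_sum
  by (intro sum.cong refl) (subst complex_norm_square, simp add: mult.commute)

lemma gram_sym: "gram Phi b a = cnj (gram Phi a b)"
  unfolding gram_def by (simp add: mult.commute)

lemma gram_prod: "gram Phi a b * gram Phi b a = of_real ((cmod (gram Phi a b))^2)"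
proof -
  have "gram Phi b a = cnj (gram Phi a b)" by (rule gram_sym)
  then show ?thesis by (simp only: complex_norm_square)
qed

lemma det_re:
  assumes "a \<noteq> b"
  shows "Re (det_on {a,b} (gram Phi)) = nrm Phi a * nrm Phi b - (cmod (gram Phi a b))^2"
proof -
  have e: "{p. p permutes {a,b}} = {id, Transposition.transpose a b}"
    by (rule set_eqI) (simp only: mem_Collect_eq permutes_doubleton_iff insert_iff empty_iff simp_thms)
  have ne: "id \<noteq> Transposition.transpose a b"
  proof
    assume "id = Transposition.transpose a b"
    then have "id a = Transposition.transpose a b a" by (rule arg_cong)
    then show False using assms by simp
  qed
  have sg: "sign (Transposition.transpose a b) = -1" using assms by (simp add: sign_swap_id)
  have "det_on {a,b} (gram Phi) = gram Phi a a * gram Phi b b - gram Phi a b * gram Phi b a"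
    unfolding det_on_def e using assms ne
    by (simp add: sign_id sg)
  then show ?thesis by (simp add: gram_prod gram_diag)
qed

lemma gram_cs: "(cmod (gram Phi a b))^2 \<le> nrm Phi a * nrm Phi b"
proof -
  have "cmod (gram Phi a b) \<le> (\<Sum>l\<in>UNIV. \<bar>cmod (Phi$l$a)\<bar> * \<bar>cmod (Phi$l$b)\<bar>)"
    unfolding gram_def by (rule order_trans[OF norm_sum]) (simp add: norm_mult)
  also have "\<dots> \<le> L2_set (\<lambda>l. cmod (Phi$l$a)) UNIV * L2_set (\<lambda>l. cmod (Phi$l$b)) UNIV"
    by (rule L2_set_mult_ineq)
  also have "\<dots> = sqrt (nrm Phi a) * sqrt (nrm Phi b)" by (simp add: L2_set_def nrm_def)
  finally have h: "cmod (gram Phi a b) \<le> sqrt (nrm Phi a) * sqrt (nrm Phi b)" .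
  have "(cmod (gram Phi a b))^2 \<le> (sqrt (nrm Phi a) * sqrt (nrm Phi b))^2"
    by (rule power_mono[OF h]) simp
  also have "\<dots> = nrm Phi a * nrm Phi b"
    by (simp add: power_mult_distrib nrm_def sum_nonneg)
  finally show ?thesis .
qed

lemma trace_nrm:
  fixes Phi :: "complex^'m^'n"
  assumes "parseval_frame Fld Phi"
  shows "(\<Sum>a\<in>UNIV. nrm Phi a) = real CARD('n)"
proof -
  have "complex_of_real (\<Sum>a\<in>UNIV. nrm Phi a) = (\<Sum>l\<in>UNIV. \<Sum>a\<in>UNIV. Phi$l$a * cnj (Phi$l$a))"
    unfolding nrm_def of_real_sum complex_norm_square by (rule sum.swap)
  also have "\<dots> = (\<Sum>l\<in>(UNIV::'n set). 1)"
  proof (rule sum.cong[OF refl])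
    fix l :: 'n
    have "(\<Sum>a\<in>UNIV. Phi$l$a * cnj (Phi$l$a)) = (if l = l then 1 else 0)"
      using assms unfolding parseval_frame_def by blast
    then show "(\<Sum>a\<in>UNIV. Phi$l$a * cnj (Phi$l$a)) = 1" by simp
  qed
  also have "\<dots> = complex_of_real (real CARD('n))" by simp
  finally show ?thesis by (simp only: of_real_eq_iff)
qed

lemma delta_sum: "(\<Sum>k\<in>(UNIV::'a::finite set). (f k :: complex) * (if l = k then 1 else 0)) = f l"
proof -
  have "(\<Sum>k\<in>UNIV. (f k :: complex) * (if l = k then 1 else 0)) = (\<Sum>k\<in>UNIV. if k = l then f k else 0)"
    by (intro sum.cong refl) auto
  then show ?thesis by (simp add: sum.delta)
qed

lemma row_nrm:
  fixes Phi :: "complex^'m^'n"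
  assumes "parseval_frame Fld Phi"
  shows "(\<Sum>b\<in>UNIV. (cmod (gram Phi a b))^2) = nrm Phi a"
proof -
  have pv: "\<And>l k. (\<Sum>b\<in>UNIV. Phi$l$b * cnj (Phi$k$b)) = (if l = k then 1 else 0)"
    using assms unfolding parseval_frame_def by blast
  have "complex_of_real (\<Sum>b\<in>UNIV. (cmod (gram Phi a b))^2) = (\<Sum>b\<in>UNIV. gram Phi a b * gram Phi b a)"
    by (simp add: gram_prod)
  also have "\<dots> = (\<Sum>b\<in>UNIV. \<Sum>l\<in>UNIV. \<Sum>k\<in>UNIV. (cnj (Phi$l$a) * Phi$k$a) * (Phi$l$b * cnj (Phi$k$b)))"
    unfolding gram_def sum_product by (intro sum.cong refl) (simp add: mult_ac)
  also have "\<dots> = (\<Sum>l\<in>UNIV. \<Sum>b\<in>UNIV. \<Sum>k\<in>UNIV. (cnj (Phi$l$a) * Phi$k$a) * (Phi$l$b * cnj (Phi$k$b)))"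
    by (rule sum.swap)
  also have "\<dots> = (\<Sum>l\<in>UNIV. \<Sum>k\<in>UNIV. \<Sum>b\<in>UNIV. (cnj (Phi$l$a) * Phi$k$a) * (Phi$l$b * cnj (Phi$k$b)))"
    by (intro sum.cong refl) (rule sum.swap)
  also have "\<dots> = (\<Sum>l\<in>UNIV. \<Sum>k\<in>UNIV. (cnj (Phi$l$a) * Phi$k$a) * (\<Sum>b\<in>UNIV. Phi$l$b * cnj (Phi$k$b)))"
    by (simp only: sum_distrib_left)
  also have "\<dots> = (\<Sum>l\<in>UNIV. \<Sum>k\<in>UNIV. (cnj (Phi$l$a) * Phi$k$a) * (if l = k then 1 else 0))"
    by (simp only: pv)
  also have "\<dots> = (\<Sum>l\<in>UNIV. cnj (Phi$l$a) * Phi$l$a)"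
    by (intro sum.cong refl) (rule delta_sum)
  also have "\<dots> = complex_of_real (nrm Phi a)" using gram_diag[of Phi a] by (simp add: gram_def)
  finally show ?thesis by (simp only: of_real_eq_iff)
qed


definition xx :: "complex^'m^'n \<Rightarrow> 'm \<Rightarrow> 'm \<Rightarrow> real" where
  "xx Phi a b = nrm Phi a * nrm Phi b - (cmod (gram Phi a b))^2"

definition yy :: "complex^'m^'n \<Rightarrow> 'm \<times> 'm \<Rightarrow> real" where
  "yy Phi p = sqrt (xx Phi (fst p) (snd p))"

definition SS :: "complex^'m^'n \<Rightarrow> real" where
  "SS Phi = (\<Sum>p\<in>{p::'m\<times>'m. fst p \<noteq> snd p}. yy Phi p)"

lemma nrm_nonneg: "0 \<le> nrm Phi a"
  unfolding nrm_def by (intro sum_nonneg) simp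

lemma xx_nonneg: "0 \<le> xx Phi a b"
  unfolding xx_def using gram_cs[of Phi a b] by simp

lemma yy_sq: "(yy Phi p)^2 = xx Phi (fst p) (snd p)"
  unfolding yy_def using xx_nonneg by simp

lemma SS_nonneg: "0 \<le> SS Phi"
  unfolding SS_def yy_def by (intro sum_nonneg) (simp add: xx_nonneg)

lemma V2_SS:
  fixes Phi :: "complex^'m^'n"
  shows "V 2 Phi = SS Phi / 2"
proof -
  have "SS Phi = (\<Sum>p\<in>{p::'m\<times>'m. fst p \<noteq> snd p}. vol_sub Phi {fst p, snd p})"
    unfolding SS_def yy_def vol_sub_def
    by (intro sum.cong refl) (simp add: det_re xx_def)
  also have "\<dots> = 2 * V 2 Phi" unfolding V_def by (rule pairs_sum)
  finally show ?thesis by simp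
qed

lemma xx_diag: "xx Phi a a = 0"
proof -
  have "cmod (gram Phi a a) = nrm Phi a" using nrm_nonneg[of Phi a] by (simp add: gram_diag)
  then show ?thesis unfolding xx_def by (simp add: power2_eq_square)
qed

lemma row_xx:
  fixes Phi :: "complex^'m^'n"
  assumes "parseval_frame Fld Phi"
  shows "(\<Sum>b\<in>UNIV - {a}. xx Phi a b) = nrm Phi a * (real CARD('n) - 1)"
proof -
  have "(\<Sum>b\<in>UNIV - {a}. xx Phi a b) = (\<Sum>b\<in>UNIV. xx Phi a b) - xx Phi a a"
    by (simp add: sum_diff1)
  also have "\<dots> = (\<Sum>b\<in>UNIV. xx Phi a b)" by (simp add: xx_diag)
  also have "\<dots> = nrm Phi a * (\<Sum>b\<in>UNIV. nrm Phi b) - (\<Sum>b\<in>UNIV. (cmod (gram Phi a b))^2)"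
    unfolding xx_def by (simp add: sum_subtractf sum_distrib_left)
  also have "\<dots> = nrm Phi a * real CARD('n) - nrm Phi a"
    using trace_nrm[OF assms] row_nrm[OF assms] by simp
  finally show ?thesis by (simp add: algebra_simps)
qed

lemma Pset: "{p::'m\<times>'m. fst p \<noteq> snd p} = Sigma UNIV (\<lambda>a. UNIV - {a})"
  by auto

lemma sumsq:
  fixes Phi :: "complex^'m^'n"
  assumes "parseval_frame Fld Phi"
  shows "(\<Sum>p\<in>{p::'m\<times>'m. fst p \<noteq> snd p}. (yy Phi p)^2) = real CARD('n) * (real CARD('n) - 1)"
proof -
  have "(\<Sum>p\<in>{p::'m\<times>'m. fst p \<noteq> snd p}. (yy Phi p)^2) = (\<Sum>a\<in>UNIV. \<Sum>b\<in>UNIV - {a}. xx Phi a b)"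
    unfolding Pset yy_sq by (subst sum.Sigma) (auto simp: case_prod_beta)
  also have "\<dots> = (\<Sum>a\<in>UNIV. nrm Phi a * (real CARD('n) - 1))"
    using row_xx[OF assms] by simp
  also have "\<dots> = real CARD('n) * (real CARD('n) - 1)"
    by (simp only: sum_distrib_right[symmetric] trace_nrm[OF assms])
  finally show ?thesis .
qed

lemma SS_le:
  fixes Phi :: "complex^'m^'n"
  assumes "parseval_frame Fld Phi"
  shows "(SS Phi)^2 \<le> real (card {p::'m\<times>'m. fst p \<noteq> snd p}) * (real CARD('n) * (real CARD('n) - 1))"
  using cs_le[of "{p::'m\<times>'m. fst p \<noteq> snd p}" "yy Phi"] sumsq[OF assms] unfolding SS_def by simp

lemma SS_eq:
  fixes Phi :: "complex^'m^'n"
  assumes "parseval_frame Fld Phi"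
  shows "(SS Phi)^2 = real (card {p::'m\<times>'m. fst p \<noteq> snd p}) * (real CARD('n) * (real CARD('n) - 1))
     \<longleftrightarrow> (\<forall>p\<in>{p::'m\<times>'m. fst p \<noteq> snd p}. \<forall>q\<in>{p::'m\<times>'m. fst p \<noteq> snd p}. yy Phi p = yy Phi q)"
  using cs_eq[of "{p::'m\<times>'m. fst p \<noteq> snd p}" "yy Phi"] sumsq[OF assms] unfolding SS_def by simp

lemma fv_norm: "norm (frame_vec Phi j) = sqrt (nrm Phi j)"
  unfolding norm_vec_def L2_set_def frame_vec_def nrm_def by simp

lemma fv_inner: "cmod (cinner (frame_vec Phi a) (frame_vec Phi b)) = cmod (gram Phi a b)"
proof -
  have "cinner (frame_vec Phi a) (frame_vec Phi b) = cnj (gram Phi a b)"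
    unfolding cinner_def frame_vec_def gram_def by (simp add: mult.commute)
  then show ?thesis by simp
qed


lemma eq_const:
  fixes Phi :: "complex^'m^'n"
  assumes pf: "parseval_frame Fld Phi" and N2: "CARD('n) \<ge> 2"
  shows "equiangular Phi \<longleftrightarrow>
    (\<forall>p\<in>{p::'m\<times>'m. fst p \<noteq> snd p}. \<forall>q\<in>{p::'m\<times>'m. fst p \<noteq> snd p}. yy Phi p = yy Phi q)"
proof
  assume "equiangular Phi"
  then obtain c d where c: "\<And>j. norm (frame_vec Phi j) = c"
    and d: "\<And>i j. i \<noteq> j \<Longrightarrow> cmod (cinner (frame_vec Phi i) (frame_vec Phi j)) = d"
    unfolding equiangular_def by blast
  have n: "nrm Phi j = c^2" for j
  proof -
    have "sqrt (nrm Phi j) = c" using c[of j] by (simp add: fv_norm)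
    then show ?thesis using nrm_nonneg[of Phi j] by auto
  qed
  have g: "cmod (gram Phi i j) = d" if "i \<noteq> j" for i j
    using d[OF that] by (simp add: fv_inner)
  have "yy Phi p = sqrt (c^2 * c^2 - d^2)" if "p \<in> {p::'m\<times>'m. fst p \<noteq> snd p}" for p
    unfolding yy_def xx_def using that by (simp add: n g)
  then show "\<forall>p\<in>{p::'m\<times>'m. fst p \<noteq> snd p}. \<forall>q\<in>{p::'m\<times>'m. fst p \<noteq> snd p}. yy Phi p = yy Phi q"
    by simp
next
  let ?P = "{p::'m\<times>'m. fst p \<noteq> snd p}"
  assume h: "\<forall>p\<in>?P. \<forall>q\<in>?P. yy Phi p = yy Phi q"
  obtain t where t: "\<And>a b. a \<noteq> b \<Longrightarrow> xx Phi a b = t"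
  proof (cases "?P = {}")
    case True
    then have "\<And>a b. a \<noteq> b \<Longrightarrow> xx Phi a b = 0" by auto
    then show ?thesis by (rule that)
  next
    case False
    then obtain p0 where p0: "p0 \<in> ?P" by blast
    have "xx Phi a b = xx Phi (fst p0) (snd p0)" if "a \<noteq> b" for a b
    proof -
      have "yy Phi (a,b) = yy Phi p0" using h p0 that by auto
      then have "(yy Phi (a,b))^2 = (yy Phi p0)^2" by simp
      then show ?thesis by (simp add: yy_sq)
    qed
    then show ?thesis by (rule that)
  qed
  have cm: "real (card (UNIV - {a::'m})) = real CARD('m) - 1" for a
  proof -
    have "CARD('m) \<ge> 1" by (simp add: Suc_leI)
    then show ?thesis by (simp add: card_Diff_singleton of_nat_diff)
  qed
  have row: "nrm Phi a * (real CARD('n) - 1) = (real CARD('m) - 1) * t" for a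
  proof -
    have "nrm Phi a * (real CARD('n) - 1) = (\<Sum>b\<in>UNIV - {a}. xx Phi a b)"
      using row_xx[OF pf] by simp
    also have "\<dots> = (\<Sum>b\<in>UNIV - {a}. t)" by (intro sum.cong refl) (auto intro: t)
    also have "\<dots> = (real CARD('m) - 1) * t" using cm[of a] by simp
    finally show ?thesis .
  qed
  define n0 where "n0 = (real CARD('m) - 1) * t / (real CARD('n) - 1)"
  have Npos: "real CARD('n) - 1 > 0" using N2 by simp
  have nn: "nrm Phi a = n0" for a
    unfolding n0_def using row[of a] Npos by (simp add: field_simps)
  have gg: "cmod (gram Phi a b) = sqrt (n0 * n0 - t)" if "a \<noteq> b" for a b
  proof -
    have "(cmod (gram Phi a b))^2 = n0 * n0 - t" using t[OF that] unfolding xx_def nn by simp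
    then show ?thesis by (metis abs_norm_cancel real_sqrt_abs)
  qed
  show "equiangular Phi"
    unfolding equiangular_def
  proof (intro conjI exI allI impI)
    show "norm (frame_vec Phi j) = sqrt n0" for j by (simp add: fv_norm nn)
    show "cmod (cinner (frame_vec Phi i) (frame_vec Phi j)) = sqrt (n0 * n0 - t)" if "i \<noteq> j" for i j
      using gg[OF that] by (simp add: fv_inner)
  qed
qed

theorem corollary11:
  fixes Fld :: "complex set" and Phi :: "complex^'m^'n"
  assumes "Fld = \<real> \<or> Fld = UNIV"
    and "CARD('n) \<ge> 2"
    and "\<exists>Psi :: complex^'m^'n. parseval_frame Fld Psi \<and> equiangular Psi"
    and "parseval_frame Fld Phi"
  shows "(\<forall>Psi :: complex^'m^'n. parseval_frame Fld Psi \<longrightarrow> V 2 Psi \<le> V 2 Phi)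
         \<longleftrightarrow> equiangular Phi"
proof -
  let ?C = "real (card {p::'m\<times>'m. fst p \<noteq> snd p}) * (real CARD('n) * (real CARD('n) - 1))"
  obtain Psi0 :: "complex^'m^'n" where p0: "parseval_frame Fld Psi0" "equiangular Psi0"
    using assms(3) by blast
  have C0: "(SS Psi0)^2 = ?C"
    using SS_eq[OF p0(1)] eq_const[OF p0(1) assms(2)] p0(2) by blast
  show ?thesis
  proof
    assume mx: "\<forall>Psi :: complex^'m^'n. parseval_frame Fld Psi \<longrightarrow> V 2 Psi \<le> V 2 Phi"
    have "V 2 Psi0 \<le> V 2 Phi" using mx p0(1) by blast
    then have "SS Psi0 \<le> SS Phi" by (simp add: V2_SS)
    then have "(SS Psi0)^2 \<le> (SS Phi)^2" using SS_nonneg[of Psi0] by (rule power_mono)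
    moreover have "(SS Phi)^2 \<le> ?C" by (rule SS_le[OF assms(4)])
    ultimately have "(SS Phi)^2 = ?C" using C0 by linarith
    then show "equiangular Phi"
      using SS_eq[OF assms(4)] eq_const[OF assms(4) assms(2)] by blast
  next
    assume eq: "equiangular Phi"
    have C1: "(SS Phi)^2 = ?C"
      using SS_eq[OF assms(4)] eq_const[OF assms(4) assms(2)] eq by blast
    show "\<forall>Psi :: complex^'m^'n. parseval_frame Fld Psi \<longrightarrow> V 2 Psi \<le> V 2 Phi"
    proof (intro allI impI)
      fix Psi :: "complex^'m^'n" assume pp: "parseval_frame Fld Psi"
      have "(SS Psi)^2 \<le> (SS Phi)^2" using SS_le[OF pp] C1 by linarith
      then have "SS Psi \<le> SS Phi" using SS_nonneg[of Phi] by (rule power2_le_imp_le)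
      then show "V 2 Psi \<le> V 2 Phi" by (simp add: V2_SS)
    qed
  qed
qed

end
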